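(* Let $\nu$ be a stochastic dynamical system on a state space $\mathcal{S}$ and let $x,y,z\in\mathcal{S}$. Then $$\tau_\nu(x\to z)\le\tau_\nu(x\to y)\cdot\tau_\nu(y\to z).$$
   Context: A stochastic dynamical system is given by transition probabilities $\nu(s_{t+1}\mid s_t)$ on a state space $\mathcal{S}$. A trajectory from $u$ to $v$ is a finite sequence of states $h=(s_1,\dots,s_n)$ with $s_1=u$, $s_n=v$; its length is $T(h)=n$ and its probability is $\nu(h)=\prod_{t=1}^{n-1}\nu(s_{t+1}\mid s_t)$. The proper time from $u$ to $v$ is $\tau_\nu(u\to v)=\min_h T(h)/\nu(h)$, the minimum over all trajectories $h$ from $u$ to $v$, and $\tau_\nu(u\to v)=\infty$ if no such trajectory exists. *)

theory Defs
  imports "HOL-Probability.Probability_Mass_Function" "HOL-Library.Extended_Nonnegative_Real"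
begin

text \<open>A stochastic dynamical system on the state space 'a is given by a transition
  kernel nu, where pmf (nu s) s' is the transition probability nu(s' | s).
  A trajectory is a nonempty list of states.\<close>

definition is_trajectory :: "'a \<Rightarrow> 'a \<Rightarrow> 'a list \<Rightarrow> bool" where
  "is_trajectory u v h \<longleftrightarrow> h \<noteq> [] \<and> hd h = u \<and> last h = v"

definition traj_prob :: "('a \<Rightarrow> 'a pmf) \<Rightarrow> 'a list \<Rightarrow> real" where
  "traj_prob nu h = (\<Prod>i<length h - 1. pmf (nu (h ! i)) (h ! Suc i))"

text \<open>Proper time: the least value of T(h)/nu(h) over trajectories from u to v,
  with value infinity when no trajectory exists (Inf of the empty set) and
  T(h)/nu(h) = infinity when nu(h) = 0.\<close>

definition proper_time :: "('a \<Rightarrow> 'a pmf) \<Rightarrow> 'a \<Rightarrow> 'a \<Rightarrow> ennreal" where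
  "proper_time nu u v =
     (INF h \<in> {h. is_trajectory u v h}. ennreal (real (length h)) / ennreal (traj_prob nu h))"

end

theory Submission
  imports Defs
begin

lemma traj_prob_single: "traj_prob nu [a] = 1"
  by (simp add: traj_prob_def)

lemma traj_prob_cons2: "traj_prob nu (a # b # t) = pmf (nu a) b * traj_prob nu (b # t)"
  unfolding traj_prob_def by (simp only: length_Cons diff_Suc_1 prod.lessThan_Suc_shift) simp

lemma traj_prob_nonneg: "0 \<le> traj_prob nu h"
  unfolding traj_prob_def by (simp add: prod_nonneg)

lemma traj_prob_le1: "traj_prob nu h \<le> 1"
  unfolding traj_prob_def by (simp add: prod_le_1 pmf_le_1)

lemma traj_prob_append:
  "h1 \<noteq> [] \<Longrightarrow> h2 \<noteq> [] \<Longrightarrow> last h1 = hd h2 \<Longrightarrow>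
   traj_prob nu (h1 @ tl h2) = traj_prob nu h1 * traj_prob nu h2"
proof (induction h1 rule: induct_list012)
  case 1 then show ?case by simp
next
  case (2 a) then show ?case by (cases h2) (auto simp: traj_prob_single)
next
  case (3 a b t)
  then show ?case by (simp add: traj_prob_cons2)
qed

lemma ratio_ge1:
  assumes "h \<noteq> []"
  shows "1 \<le> ennreal (real (length h)) / ennreal (traj_prob nu h)"
proof (cases "traj_prob nu h = 0")
  case True
  then show ?thesis using assms by simp
next
  case False
  then have p: "0 < traj_prob nu h" using traj_prob_nonneg[of nu h] by simp
  have "1 \<le> real (length h) / traj_prob nu h"
    using traj_prob_le1[of nu h] p assms
  proof -
    have "traj_prob nu h \<le> 1" by (rule traj_prob_le1)
    also have "1 \<le> real (length h)" using assms by (simp add: Suc_leI)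
    finally show ?thesis using p by simp
  qed
  then show ?thesis using p by (simp add: divide_ennreal)
qed

lemma pt_ge1: "1 \<le> proper_time nu u v"
  unfolding proper_time_def is_trajectory_def
  by (rule INF_greatest) (auto intro: ratio_ge1)

lemma ratio_ineq:
  fixes n1 n2 :: nat and p1 p2 :: real
  assumes "1 \<le> n1" "1 \<le> n2" "0 \<le> p1" "0 \<le> p2"
  shows "ennreal (real (n1 + n2 - 1)) / ennreal (p1 * p2)
     \<le> (ennreal (real n1) / ennreal p1) * (ennreal (real n2) / ennreal p2)"
proof (cases "p1 = 0 \<or> p2 = 0")
  case True
  have a: "ennreal (real n1) / ennreal p1 \<noteq> 0" "ennreal (real n2) / ennreal p2 \<noteq> 0"
    using assms by (auto simp: ennreal_divide_eq_0_iff)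
  show ?thesis using True a assms by auto
next
  case False
  then have p: "0 < p1" "0 < p2" using assms by auto
  have "real (n1 + n2 - 1) \<le> real n1 * real n2"
  proof -
    have "n1 + n2 - 1 \<le> n1 * n2" using assms
    proof -
      obtain a b where "n1 = Suc a" "n2 = Suc b" using assms by (metis Suc_le_D One_nat_def)
      then show ?thesis by simp
    qed
    then show ?thesis by (metis of_nat_le_iff of_nat_mult)
  qed
  then have "real (n1 + n2 - 1) / (p1 * p2) \<le> (real n1 / p1) * (real n2 / p2)"
    using p by (simp add: divide_right_mono)
  then show ?thesis using p
    by (simp add: divide_ennreal ennreal_mult[symmetric] ennreal_leI)
qed


lemma cmult_INF:
  fixes c :: ennreal
  assumes "c < top" "B \<noteq> {}"
  shows "c * (INF h\<in>B. g h) = (INF h\<in>B. c * g h)"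
proof -
  have cont: "continuous_on UNIV (\<lambda>x::ennreal. c * x)"
    using ennreal_continuous_on_cmult[OF assms(1) continuous_on_id] by simp
  have "c * Inf (g ` B) = Inf ((\<lambda>x. c * x) ` (g ` B))"
  proof (rule continuous_at_Inf_mono)
    show "mono (\<lambda>x::ennreal. c * x)" by (simp add: mono_def mult_left_mono)
    show "continuous (at_right (Inf (g ` B))) (\<lambda>x. c * x)"
      using cont by (simp add: continuous_on_eq_continuous_within continuous_at_imp_continuous_at_within)
    show "g ` B \<noteq> {}" using assms(2) by simp
    show "bdd_below (g ` B)" by simp
  qed
  then show ?thesis by (simp add: image_image)
qed

theorem mainTheorem2:
  fixes nu :: "'a \<Rightarrow> 'a pmf" and x y z :: 'a
  shows "proper_time nu x z \<le> proper_time nu x y * proper_time nu y z"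
proof -
  define f where "f = (\<lambda>h. ennreal (real (length h)) / ennreal (traj_prob nu h))"
  define A where "A = {h. is_trajectory x y h}"
  define B where "B = {h. is_trajectory y z h}"
  have a_def: "proper_time nu x y = (INF h\<in>A. f h)" unfolding proper_time_def f_def A_def ..
  have b_def: "proper_time nu y z = (INF h\<in>B. f h)" unfolding proper_time_def f_def B_def ..
  have c_def: "proper_time nu x z = (INF h\<in>{h. is_trajectory x z h}. f h)" unfolding proper_time_def f_def ..
  have a1: "proper_time nu x y \<noteq> 0" and b1: "proper_time nu y z \<noteq> 0"
    using pt_ge1[of nu x y] pt_ge1[of nu y z] by auto
  show ?thesis
  proof (cases "proper_time nu x y = top \<or> proper_time nu y z = top")
    case True
    then show ?thesis using a1 b1 by auto
  next
    case False
    then have at: "proper_time nu x y < top" and bt: "proper_time nu y z < top"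
      by (auto simp: top.not_eq_extremum)
    have Ane: "A \<noteq> {}" using at a_def by auto
    have Bne: "B \<noteq> {}" using bt b_def by auto
    have key: "proper_time nu x z \<le> f h1 * proper_time nu y z" if h1: "h1 \<in> A" for h1
    proof (cases "f h1 = top")
      case True
      then show ?thesis using b1 by simp
    next
      case False
      then have ft: "f h1 < top" by (simp add: top.not_eq_extremum)
      have "proper_time nu x z \<le> (INF h2\<in>B. f h1 * f h2)"
      proof (rule INF_greatest)
        fix h2 assume h2: "h2 \<in> B"
        have t1: "h1 \<noteq> []" "hd h1 = x" "last h1 = y" using h1 by (auto simp: A_def is_trajectory_def)
        have t2: "h2 \<noteq> []" "hd h2 = y" "last h2 = z" using h2 by (auto simp: B_def is_trajectory_def)
        have tr: "is_trajectory x z (h1 @ tl h2)"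
          using t1 t2 unfolding is_trajectory_def
          by (cases h2) (auto simp: last_append)
        have len: "length (h1 @ tl h2) = length h1 + length h2 - 1"
          using t2 by (cases h2) auto
        have pr: "traj_prob nu (h1 @ tl h2) = traj_prob nu h1 * traj_prob nu h2"
          using t1 t2 by (simp add: traj_prob_append)
        have "proper_time nu x z \<le> f (h1 @ tl h2)"
          unfolding c_def using tr by (intro INF_lower) simp
        also have "\<dots> \<le> f h1 * f h2"
          unfolding f_def len pr
          by (rule ratio_ineq) (use t1 t2 in \<open>auto simp: traj_prob_nonneg Suc_leI\<close>)
        finally show "proper_time nu x z \<le> f h1 * f h2" .
      qed
      also have "\<dots> = f h1 * proper_time nu y z"
        unfolding b_def using cmult_INF[OF ft Bne, of f] by simp
      finally show ?thesis .
    qed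
    have "proper_time nu x z \<le> (INF h1\<in>A. proper_time nu y z * f h1)"
      by (rule INF_greatest) (simp add: key mult.commute)
    also have "\<dots> = proper_time nu y z * proper_time nu x y"
      unfolding a_def using cmult_INF[OF bt Ane, of f] by simp
    finally show ?thesis by (simp add: mult.commute)
  qed
qed

end
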